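(* For every $c\in V$, the function $h^c_{YX}:[0,\|c\|_X]\to[0,\|c\|_Y]$ is Lipschitz continuous.
   Context: $V$ is a finite dimensional real vector space with a positive definite symmetric bilinear form $\langle\cdot,\cdot\rangle$ and $\|v\|_2=\sqrt{\langle v,v\rangle}$; $\|\cdot\|_X$ is a norm with dual norm $\|v\|_Y=\max\{\langle v,w\rangle:\|w\|_X=1\}$. For $x\in[0,\|c\|_X]$, $\alpha^c_{2X}(x)$ is the unique minimizer of $\|c-a\|_2$ subject to $\|a\|_X\le x$, and $h^c_{YX}(x)=\|c-\alpha^c_{2X}(x)\|_Y$. *)

theory Defs
  imports "HOL-Analysis.Analysis"
begin

text \<open>V is modelled by a type of class euclidean_space: a finite-dimensional real
  inner product space; its inner product and norm are the form and the 2-norm.\<close>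

definition is_norm :: "('a::real_vector \<Rightarrow> real) \<Rightarrow> bool" where
  "is_norm N \<longleftrightarrow>
     (\<forall>v. 0 \<le> N v) \<and> (\<forall>v. N v = 0 \<longleftrightarrow> v = 0) \<and>
     (\<forall>r v. N (r *\<^sub>R v) = \<bar>r\<bar> * N v) \<and> (\<forall>v w. N (v + w) \<le> N v + N w)"

definition dual_norm :: "('a::real_inner \<Rightarrow> real) \<Rightarrow> 'a \<Rightarrow> real" where
  "dual_norm N v = Sup ((\<lambda>w. inner v w) ` {w. N w = 1})"

definition alpha2X :: "('a::real_inner \<Rightarrow> real) \<Rightarrow> 'a \<Rightarrow> real \<Rightarrow> 'a" where
  "alpha2X N c x = (THE a. N a \<le> x \<and> (\<forall>b. N b \<le> x \<longrightarrow> norm (c - a) \<le> norm (c - b)))"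

definition hYX :: "('a::real_inner \<Rightarrow> real) \<Rightarrow> 'a \<Rightarrow> real \<Rightarrow> real" where
  "hYX N c x = dual_norm N (c - alpha2X N c x)"

end

theory Submission
  imports Defs
begin

lemma isn_sum:
  assumes "is_norm N" "finite S"
  shows "N (sum f S) \<le> (\<Sum>i\<in>S. N (f i))"
  using assms(2)
proof (induction S rule: finite_induct)
  case empty
  have "N 0 = 0" using assms(1) unfolding is_norm_def by blast
  then show ?case by simp
next
  case (insert x F)
  have "N (f x + sum f F) \<le> N (f x) + N (sum f F)" using assms(1) unfolding is_norm_def by blast
  then show ?case using insert by simp
qed

lemma isn_upper:
  fixes N :: "'a::euclidean_space \<Rightarrow> real"
  assumes "is_norm N"
  shows "\<exists>C\<ge>0. \<forall>v. N v \<le> C * norm v"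
proof (intro exI[of _ "\<Sum>i\<in>Basis. N i"] conjI allI)
  show "0 \<le> (\<Sum>i\<in>Basis. N i)" using assms unfolding is_norm_def by (simp add: sum_nonneg)
  fix v :: 'a
  have "N v = N (\<Sum>i\<in>Basis. (v \<bullet> i) *\<^sub>R i)" by (simp add: euclidean_representation)
  also have "\<dots> \<le> (\<Sum>i\<in>Basis. N ((v \<bullet> i) *\<^sub>R i))" by (rule isn_sum[OF assms]) simp
  also have "\<dots> = (\<Sum>i\<in>Basis. \<bar>v \<bullet> i\<bar> * N i)" using assms unfolding is_norm_def by simp
  also have "\<dots> \<le> (\<Sum>i\<in>Basis. norm v * N i)"
  proof (rule sum_mono)
    fix i :: 'a assume "i \<in> Basis"
    then have "\<bar>v \<bullet> i\<bar> \<le> norm v" by (simp add: Basis_le_norm)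
    moreover have "0 \<le> N i" using assms unfolding is_norm_def by blast
    ultimately show "\<bar>v \<bullet> i\<bar> * N i \<le> norm v * N i" by (simp add: mult_right_mono)
  qed
  also have "\<dots> = (\<Sum>i\<in>Basis. N i) * norm v" by (simp add: sum_distrib_left mult.commute)
  finally show "N v \<le> (\<Sum>i\<in>Basis. N i) * norm v" .
qed

lemma isn_diff:
  assumes "is_norm N"
  shows "\<bar>N v - N w\<bar> \<le> N (v - w)"
proof -
  have t: "\<And>a b. N (a + b) \<le> N a + N b" using assms unfolding is_norm_def by blast
  have s: "N (w - v) = N (v - w)"
    using assms unfolding is_norm_def by (metis abs_minus_cancel abs_one minus_diff_eq mult_1 scaleR_minus1_left)
  have "N v \<le> N (v - w) + N w" using t[of "v - w" w] by simp
  moreover have "N w \<le> N (w - v) + N v" using t[of "w - v" v] by simp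
  ultimately show ?thesis using s by linarith
qed

lemma isn_cont:
  fixes N :: "'a::euclidean_space \<Rightarrow> real"
  assumes "is_norm N"
  shows "continuous_on S N"
proof -
  obtain C where C: "C \<ge> 0" "\<And>v. N v \<le> C * norm v" using isn_upper[OF assms] by blast
  have "C-lipschitz_on S N"
  proof (rule lipschitz_onI)
    fix x y assume "x \<in> S" "y \<in> S"
    have "\<bar>N x - N y\<bar> \<le> C * norm (x - y)" using isn_diff[OF assms] C(2) order_trans by blast
    then show "dist (N x) (N y) \<le> C * dist x y" by (simp add: dist_norm dist_real_def)
  qed (fact C(1))
  then show ?thesis by (rule lipschitz_on_continuous_on)
qed

lemma isn_lower:
  fixes N :: "'a::euclidean_space \<Rightarrow> real"
  assumes "is_norm N"
  shows "\<exists>m>0. \<forall>v. m * norm v \<le> N v"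
proof -
  obtain b :: 'a where b: "b \<in> Basis" using nonempty_Basis by blast
  have ne: "sphere (0::'a) 1 \<noteq> {}" using b by (auto simp: sphere_def intro!: exI[of _ b])
  obtain v0 where v0: "v0 \<in> sphere 0 1" "\<And>y. y \<in> sphere 0 1 \<Longrightarrow> N v0 \<le> N y"
    using continuous_attains_inf[OF compact_sphere ne isn_cont[OF assms]] by blast
  have "v0 \<noteq> 0" using v0(1) by auto
  then have pos: "N v0 > 0" using assms unfolding is_norm_def by (metis less_eq_real_def)
  show ?thesis
  proof (intro exI[of _ "N v0"] conjI allI pos)
    fix v :: 'a
    show "N v0 * norm v \<le> N v"
    proof (cases "v = 0")
      case True then show ?thesis using assms unfolding is_norm_def by simp
    next
      case False
      let ?u = "(1 / norm v) *\<^sub>R v"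
      have "?u \<in> sphere 0 1" using False by simp
      then have "N v0 \<le> N ?u" by (rule v0(2))
      also have "N ?u = N v / norm v" using assms False unfolding is_norm_def by simp
      finally show ?thesis using False by (simp add: field_simps)
    qed
  qed
qed

lemma alpha_props:
  fixes N :: "'a::euclidean_space \<Rightarrow> real"
  assumes "is_norm N" "0 \<le> x"
  shows "N (alpha2X N c x) \<le> x"
    and "\<And>y. N y \<le> x \<Longrightarrow> inner (c - alpha2X N c x) (y - alpha2X N c x) \<le> 0"
proof -
  let ?S = "{a. N a \<le> x}"
  have cl: "closed ?S" by (rule closed_Collect_le) (auto intro: isn_cont[OF assms(1)])
  have N0: "N 0 = 0" using assms(1) unfolding is_norm_def by blast
  have ne: "?S \<noteq> {}" using N0 assms(2) by (auto intro!: exI[of _ 0])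
  have cv: "convex ?S"
  proof (rule convexI)
    fix a b u v assume "a \<in> ?S" "b \<in> ?S" "0 \<le> (u::real)" "0 \<le> (v::real)" "u + v = 1"
    have h1: "N (u *\<^sub>R a + v *\<^sub>R b) \<le> N (u *\<^sub>R a) + N (v *\<^sub>R b)"
      using assms(1) unfolding is_norm_def by blast
    have h2: "N (u *\<^sub>R a) = u * N a" "N (v *\<^sub>R b) = v * N b"
      using assms(1) \<open>0 \<le> u\<close> \<open>0 \<le> v\<close> unfolding is_norm_def by auto
    have "N (u *\<^sub>R a + v *\<^sub>R b) \<le> u * x + v * x"
    proof -
      have "u * N a \<le> u * x" using \<open>a \<in> ?S\<close> \<open>0 \<le> u\<close> by (simp add: mult_left_mono)
      moreover have "v * N b \<le> v * x" using \<open>b \<in> ?S\<close> \<open>0 \<le> v\<close> by (simp add: mult_left_mono)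
      ultimately show ?thesis using h1 h2 by linarith
    qed
    then show "u *\<^sub>R a + v *\<^sub>R b \<in> ?S" using \<open>u + v = 1\<close> by (simp add: distrib_right[symmetric])
  qed
  let ?P = "\<lambda>a. N a \<le> x \<and> (\<forall>b. N b \<le> x \<longrightarrow> norm (c - a) \<le> norm (c - b))"
  have ex: "?P (closest_point ?S c)"
    using closest_point_exists[OF cl ne, of c] by (auto simp: dist_norm)
  have un: "\<And>a. ?P a \<Longrightarrow> a = closest_point ?S c"
    by (rule closest_point_unique[OF cv cl]) (auto simp: dist_norm)
  have eq: "alpha2X N c x = closest_point ?S c"
    unfolding alpha2X_def using ex un by (rule the_equality)
  show "N (alpha2X N c x) \<le> x" using ex eq by simp
  fix y assume "N y \<le> x"
  then show "inner (c - alpha2X N c x) (y - alpha2X N c x) \<le> 0"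
    using any_closest_point_dot[OF cv cl, of "alpha2X N c x" y c] ex eq by (auto simp: dist_norm)
qed



lemma alpha_lip:
  fixes N :: "'a::euclidean_space \<Rightarrow> real"
  assumes "is_norm N" "m > 0" "\<And>v. m * norm v \<le> N v" "0 \<le> t" "0 \<le> s"
  shows "norm (alpha2X N c t - alpha2X N c s) \<le> (1/m) * \<bar>t - s\<bar>"
proof -
  have bnd: "\<And>v x. N v \<le> x \<Longrightarrow> norm v \<le> x / m"
  proof -
    fix v x assume "N v \<le> x"
    then have "m * norm v \<le> x" using assms(3)[of v] by linarith
    then show "norm v \<le> x / m" using assms(2) by (simp add: pos_le_divide_eq mult.commute)
  qed
  have key: "norm (alpha2X N c t - alpha2X N c s) \<le> (1/m) * \<bar>t - s\<bar>"
    if "0 \<le> t" "0 \<le> s" "s = 0" for t s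
  proof -
    have "norm (alpha2X N c s) \<le> 0" using bnd alpha_props(1)[OF assms(1) that(2)] that(3) by fastforce
    then have "alpha2X N c s = 0" by simp
    then show ?thesis using bnd[OF alpha_props(1)[OF assms(1) that(1)]] that by simp
  qed
  show ?thesis
  proof (cases "s = 0 \<or> t = 0")
    case True
    then show ?thesis
      using key[OF assms(4,5)] key[OF assms(5,4)] by (metis abs_minus_commute norm_minus_commute)
  next
    case False
    then have tp: "t > 0" and sp: "s > 0" using assms(4,5) by auto
    define a where "a = alpha2X N c t"
    define b where "b = alpha2X N c s"
    have Na: "N a \<le> t" unfolding a_def by (rule alpha_props(1)[OF assms(1,4)])
    have Nb: "N b \<le> s" unfolding b_def by (rule alpha_props(1)[OF assms(1,5)])
    have sc: "\<And>r v. r \<ge> 0 \<Longrightarrow> N (r *\<^sub>R v) = r * N v" using assms(1) unfolding is_norm_def by simp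
    have scl: "N ((p/q) *\<^sub>R v) \<le> p" if "N v \<le> q" "0 < p" "0 < q" for p q v
    proof -
      have "N ((p/q) *\<^sub>R v) = (p/q) * N v" by (rule sc) (use that in simp)
      also have "\<dots> \<le> (p/q) * q" by (rule mult_left_mono) (use that in simp_all)
      also have "\<dots> = p" using that by simp
      finally show ?thesis .
    qed
    have "N ((t/s) *\<^sub>R b) \<le> t" by (rule scl[OF Nb tp sp])
    then have "inner (c - a) ((t/s) *\<^sub>R b - a) \<le> 0"
      unfolding a_def by (rule alpha_props(2)[OF assms(1,4)])
    then have "s * inner (c - a) ((t/s) *\<^sub>R b - a) \<le> 0" using sp by (simp add: mult_nonneg_nonpos)
    then have i1: "inner (c - a) (t *\<^sub>R b - s *\<^sub>R a) \<le> 0"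
      using sp by (simp add: inner_diff_right field_simps)
    have "N ((s/t) *\<^sub>R a) \<le> s" by (rule scl[OF Na sp tp])
    then have "inner (c - b) ((s/t) *\<^sub>R a - b) \<le> 0"
      unfolding b_def by (rule alpha_props(2)[OF assms(1,5)])
    then have "t * inner (c - b) ((s/t) *\<^sub>R a - b) \<le> 0" using tp by (simp add: mult_nonneg_nonpos)
    then have i2: "inner (c - b) (s *\<^sub>R a - t *\<^sub>R b) \<le> 0"
      using tp by (simp add: inner_diff_right field_simps)
    have "inner (b - a) (t *\<^sub>R b - s *\<^sub>R a) \<le> 0"
      using i1 i2 by (simp add: inner_diff_left inner_diff_right algebra_simps)
    moreover have "t *\<^sub>R b - s *\<^sub>R a = t *\<^sub>R (b - a) + (t - s) *\<^sub>R a" by (simp add: algebra_simps)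
    ultimately have q1: "t * (norm (b - a))^2 + (t - s) * inner (b - a) a \<le> 0"
      by (simp add: inner_add_right power2_norm_eq_inner)
    have q2: "- ((t - s) * inner (b - a) a) \<le> \<bar>t - s\<bar> * (norm (b - a) * norm a)"
    proof -
      have "\<bar>(t - s) * inner (b - a) a\<bar> \<le> \<bar>t - s\<bar> * (norm (b - a) * norm a)"
        by (simp add: abs_mult mult_left_mono Cauchy_Schwarz_ineq2)
      then show ?thesis by linarith
    qed
    have na: "norm a \<le> t / m" by (rule bnd[OF Na])
    have "t * (norm (b - a))^2 \<le> \<bar>t - s\<bar> * (norm (b - a) * (t / m))"
    proof -
      have "\<bar>t - s\<bar> * (norm (b - a) * norm a) \<le> \<bar>t - s\<bar> * (norm (b - a) * (t / m))"
        by (intro mult_left_mono na) simp_all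
      then show ?thesis using q1 q2 by linarith
    qed
    then have "t * (norm (b - a) * norm (b - a)) \<le> t * (norm (b - a) * (\<bar>t - s\<bar> / m))"
      by (simp add: power2_eq_square algebra_simps)
    then have "norm (b - a) * norm (b - a) \<le> norm (b - a) * (\<bar>t - s\<bar> / m)" using tp by (rule mult_left_le_imp_le)
    then have "norm (b - a) \<le> \<bar>t - s\<bar> / m"
    proof (cases "norm (b - a) = 0")
      case True then show ?thesis using assms(2) by simp
    next
      case False
      then have "0 < norm (b - a)" by simp
      with \<open>norm (b - a) * norm (b - a) \<le> norm (b - a) * (\<bar>t - s\<bar> / m)\<close>
      show ?thesis by (rule mult_left_le_imp_le)
    qed
    then show ?thesis unfolding a_def b_def by (simp add: norm_minus_commute)
  qed
qed

lemma dual_lip: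
  fixes N :: "'a::euclidean_space \<Rightarrow> real"
  assumes "is_norm N" "m > 0" "\<And>v. m * norm v \<le> N v"
  shows "dual_norm N v - dual_norm N v' \<le> (1/m) * norm (v - v')"
proof -
  let ?W = "{w. N w = 1}"
  have wb: "\<And>w. w \<in> ?W \<Longrightarrow> norm w \<le> 1/m" 
  proof -
    fix w assume "w \<in> ?W"
    then have "m * norm w \<le> 1" using assms(3)[of w] by simp
    then show "norm w \<le> 1/m" using assms(2) by (simp add: field_simps mult.commute)
  qed
  obtain b :: 'a where b: "b \<in> Basis" using nonempty_Basis by blast
  have "b \<noteq> 0" using b by auto
  then have Nbp: "N b > 0" using assms(1) unfolding is_norm_def by (metis less_eq_real_def)
  have "N ((1 / N b) *\<^sub>R b) = 1" using assms(1) Nbp \<open>b \<noteq> 0\<close> unfolding is_norm_def by simp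
  then have ne: "?W \<noteq> {}" by blast
  have ib: "\<And>u w. w \<in> ?W \<Longrightarrow> inner u w \<le> norm u * (1/m)"
  proof -
    fix u w assume "w \<in> ?W"
    have "inner u w \<le> norm u * norm w" by (simp add: norm_cauchy_schwarz)
    also have "\<dots> \<le> norm u * (1/m)" by (rule mult_left_mono[OF wb[OF \<open>w \<in> ?W\<close>]]) simp
    finally show "inner u w \<le> norm u * (1/m)" .
  qed
  have bdd: "bdd_above ((\<lambda>w. inner v' w) ` ?W)"
    by (rule bdd_aboveI2[where M="norm v' * (1/m)"]) (rule ib)
  have "Sup ((\<lambda>w. inner v w) ` ?W) \<le> dual_norm N v' + (1/m) * norm (v - v')"
  proof (rule cSup_least)
    show "(\<lambda>w. inner v w) ` ?W \<noteq> {}" using ne by blast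
    fix y assume "y \<in> (\<lambda>w. inner v w) ` ?W"
    then obtain w where w: "w \<in> ?W" "y = inner v w" by blast
    have "inner v w = inner v' w + inner (v - v') w" by (simp add: inner_diff_left)
    also have "inner v' w \<le> dual_norm N v'"
      unfolding dual_norm_def using w(1) bdd by (auto intro: cSup_upper)
    moreover have "inner (v - v') w \<le> (1/m) * norm (v - v')" using ib[OF w(1)] by simp
    ultimately show "y \<le> dual_norm N v' + (1/m) * norm (v - v')" using w(2) by linarith
  qed
  then show ?thesis unfolding dual_norm_def by simp
qed

theorem mainTheorem9:
  fixes N :: "'a::euclidean_space \<Rightarrow> real" and c :: 'a
  assumes "is_norm N"
  shows "\<exists>L. L-lipschitz_on {0..N c} (hYX N c)"
proof -
  obtain m where m: "m > 0" "\<And>v. m * norm v \<le> N v" using isn_lower[OF assms] by blast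
  have "((1/m) * (1/m))-lipschitz_on {0..N c} (hYX N c)"
  proof (rule lipschitz_onI)
    show "0 \<le> (1/m) * (1/m)" using m by simp
    fix x y assume "x \<in> {0..N c}" "y \<in> {0..N c}"
    then have x0: "0 \<le> x" and y0: "0 \<le> y" by auto
    have al: "norm (alpha2X N c x - alpha2X N c y) \<le> (1/m) * \<bar>x - y\<bar>"
      by (rule alpha_lip[OF assms m x0 y0])
    have e: "norm ((c - alpha2X N c x) - (c - alpha2X N c y)) = norm (alpha2X N c x - alpha2X N c y)"
    proof -
      have "(c - alpha2X N c x) - (c - alpha2X N c y) = alpha2X N c y - alpha2X N c x" by simp
      then show ?thesis by (simp add: norm_minus_commute)
    qed
    have "hYX N c x - hYX N c y \<le> (1/m) * norm (alpha2X N c x - alpha2X N c y)"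
      unfolding hYX_def using dual_lip[OF assms m, of "c - alpha2X N c x" "c - alpha2X N c y"] e by simp
    moreover have "hYX N c y - hYX N c x \<le> (1/m) * norm (alpha2X N c x - alpha2X N c y)"
      unfolding hYX_def using dual_lip[OF assms m, of "c - alpha2X N c y" "c - alpha2X N c x"] e
      by (simp add: norm_minus_commute)
    ultimately have "\<bar>hYX N c x - hYX N c y\<bar> \<le> (1/m) * norm (alpha2X N c x - alpha2X N c y)" by linarith
    also have "\<dots> \<le> (1/m) * ((1/m) * \<bar>x - y\<bar>)" by (rule mult_left_mono[OF al]) (use m(1) in simp)
    finally show "dist (hYX N c x) (hYX N c y) \<le> (1/m) * (1/m) * dist x y"
      by (simp add: dist_real_def mult.assoc)
  qed
  then show ?thesis by blast
qed

end
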